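(* Let $K\ge 2$, let $\mathcal{D}$ be a probability distribution on $\mathcal{X}\times\mathcal{Y}$ with $\mathcal{Y}=\{1,\dots,K\}$, and let $\rho$ be a probability distribution over classifiers $h:\mathcal{X}\to\mathcal{Y}$. Let $W_\rho(X,Y)=\mathbb{E}_{h\sim\rho}[\mathbb{1}(h(X)\neq Y)]$ for $(X,Y)\sim\mathcal{D}$. Suppose $\rho$ is competent, i.e. for every $0\le t\le 1/2$, $$\mathbb{P}_{\mathcal{D}}\big(W_\rho\in[t,1/2)\big)\;\ge\;\mathbb{P}_{\mathcal{D}}\big(W_\rho\in[1/2,1-t]\big).$$ Suppose $\mathbb{E}_{h\sim\rho}[L(h)]\neq 0$. Then the ensemble improvement rate satisfies $\mathrm{EIR}\ge 0$, i.e. $L(h_{\mathrm{MV}})\le \mathbb{E}_{h\sim\rho}[L(h)]$.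
   Context: The error rate of a classifier is $L(h)=\mathbb{E}_{(X,Y)\sim\mathcal{D}}[\mathbb{1}(h(X)\neq Y)]$. The majority vote classifier is $h_{\mathrm{MV}}(x)=\arg\max_j \mathbb{E}_{h\sim\rho}[\mathbb{1}(h(x)=j)]$ (ties broken arbitrarily). The ensemble improvement rate is $\mathrm{EIR}=\big(\mathbb{E}_{h\sim\rho}[L(h)]-L(h_{\mathrm{MV}})\big)/\mathbb{E}_{h\sim\rho}[L(h)]$, defined when $\mathbb{E}_{h\sim\rho}[L(h)]\neq 0$. *)

theory Defs
  imports "HOL-Probability.Probability"
begin

definition err :: "('x \<times> nat) measure \<Rightarrow> ('x \<Rightarrow> nat) \<Rightarrow> real" where
  "err D h = measure D {z \<in> space D. h (fst z) \<noteq> snd z}"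

definition avg_err :: "('x \<Rightarrow> nat) measure \<Rightarrow> ('x \<times> nat) measure \<Rightarrow> real" where
  "avg_err \<rho> D = (\<integral>h. err D h \<partial>\<rho>)"

definition W :: "('x \<Rightarrow> nat) measure \<Rightarrow> 'x \<times> nat \<Rightarrow> real" where
  "W \<rho> z = (\<integral>h. indicator {h. h (fst z) \<noteq> snd z} h \<partial>\<rho>)"

definition vote :: "('x \<Rightarrow> nat) measure \<Rightarrow> 'x \<Rightarrow> nat \<Rightarrow> real" where
  "vote \<rho> x j = (\<integral>h. indicator {h. h x = j} h \<partial>\<rho>)"

definition is_majority_vote ::
  "nat \<Rightarrow> 'x measure \<Rightarrow> ('x \<Rightarrow> nat) measure \<Rightarrow> ('x \<Rightarrow> nat) \<Rightarrow> bool" where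
  "is_majority_vote K X \<rho> hMV \<longleftrightarrow>
     (\<forall>x\<in>space X. hMV x \<in> {1..K} \<and> (\<forall>j\<in>{1..K}. vote \<rho> x j \<le> vote \<rho> x (hMV x)))"

definition EIR :: "('x \<Rightarrow> nat) measure \<Rightarrow> ('x \<times> nat) measure \<Rightarrow> ('x \<Rightarrow> nat) \<Rightarrow> real" where
  "EIR \<rho> D hMV = (avg_err \<rho> D - err D hMV) / avg_err \<rho> D"

definition competent :: "('x \<Rightarrow> nat) measure \<Rightarrow> ('x \<times> nat) measure \<Rightarrow> bool" where
  "competent \<rho> D \<longleftrightarrow>
     (\<forall>t::real. 0 \<le> t \<and> t \<le> 1/2 \<longrightarrow>
        measure D {z \<in> space D. W \<rho> z \<in> {t..<1/2}}
          \<ge> measure D {z \<in> space D. W \<rho> z \<in> {1/2..1-t}})"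

end

theory Submission
  imports Defs
begin

lemma layer_cake_comp:
  fixes M :: "'a measure" and f :: "'a \<Rightarrow> real"
  assumes P: "prob_space M"
    and fm[measurable]: "f \<in> borel_measurable M"
    and fb: "\<And>z. z \<in> space M \<Longrightarrow> 0 \<le> f z \<and> f z \<le> 1"
    and c: "\<And>t. 0 \<le> t \<Longrightarrow> t \<le> 1/2 \<Longrightarrow>
       measure M {z \<in> space M. f z \<in> {1/2..1-t}} \<le> measure M {z \<in> space M. f z \<in> {t..<1/2}}"
  shows "measure M {z \<in> space M. 1/2 \<le> f z} \<le> (\<integral>z. f z \<partial>M)"
proof -
  interpret M: prob_space M by fact
  interpret PL: pair_sigma_finite M lborel by unfold_locales
  define g where "g = (\<lambda>z t. if f z < 1/2 \<and> 0 \<le> t \<and> t \<le> f z then 1 else 0 :: ennreal)"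
  define h where "h = (\<lambda>z t. if 1/2 \<le> f z \<and> 0 \<le> t \<and> t \<le> 1 - f z then 1 else 0 :: ennreal)"
  have gm: "case_prod g \<in> borel_measurable (M \<Otimes>\<^sub>M lborel)"
    unfolding g_def by measurable
  have hm: "case_prod h \<in> borel_measurable (M \<Otimes>\<^sub>M lborel)"
    unfolding h_def by measurable
  have g1: "(\<integral>\<^sup>+t. g z t \<partial>lborel) = ennreal (if f z < 1/2 then f z else 0)" if z: "z \<in> space M" for z
  proof (cases "f z < 1/2")
    case True
    then have "(\<lambda>t. g z t) = indicator {0..f z}"
      by (auto simp: g_def fun_eq_iff split: split_indicator)
    then show ?thesis using True fb[OF z] by simp
  next
    case False
    then show ?thesis by (simp add: g_def)
  qed
  have h1: "(\<integral>\<^sup>+t. h z t \<partial>lborel) = ennreal (if 1/2 \<le> f z then 1 - f z else 0)" if z: "z \<in> space M" for z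
  proof (cases "1/2 \<le> f z")
    case True
    then have "(\<lambda>t. h z t) = indicator {0..1 - f z}"
      by (auto simp: h_def fun_eq_iff split: split_indicator)
    then show ?thesis using True fb[OF z] by simp
  next
    case False
    then show ?thesis by (simp add: h_def)
  qed
  have g2: "(\<integral>\<^sup>+z. g z t \<partial>M) = (if 0 \<le> t then emeasure M {z \<in> space M. f z \<in> {t..<1/2}} else 0)" for t
  proof (cases "0 \<le> t")
    case True
    have "(\<integral>\<^sup>+z. g z t \<partial>M) = (\<integral>\<^sup>+z. indicator {z \<in> space M. f z \<in> {t..<1/2}} z \<partial>M)"
      using True by (intro nn_integral_cong) (auto simp: g_def split: split_indicator)
    also have "\<dots> = emeasure M {z \<in> space M. f z \<in> {t..<1/2}}"
      by (intro nn_integral_indicator) measurable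
    finally show ?thesis using True by simp
  next
    case False
    then show ?thesis by (simp add: g_def)
  qed
  have h2: "(\<integral>\<^sup>+z. h z t \<partial>M) = (if 0 \<le> t then emeasure M {z \<in> space M. f z \<in> {1/2..1-t}} else 0)" for t
  proof (cases "0 \<le> t")
    case True
    have "(\<integral>\<^sup>+z. h z t \<partial>M) = (\<integral>\<^sup>+z. indicator {z \<in> space M. f z \<in> {1/2..1-t}} z \<partial>M)"
      using True by (intro nn_integral_cong) (auto simp: h_def split: split_indicator)
    also have "\<dots> = emeasure M {z \<in> space M. f z \<in> {1/2..1-t}}"
      by (intro nn_integral_indicator) measurable
    finally show ?thesis using True by simp
  next
    case False
    then show ?thesis by (simp add: h_def)
  qed
  have pw: "(\<integral>\<^sup>+z. h z t \<partial>M) \<le> (\<integral>\<^sup>+z. g z t \<partial>M)" for t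
  proof (cases "0 \<le> t \<and> t \<le> 1/2")
    case True
    then show ?thesis using c[of t]
      by (simp add: g2 h2 M.emeasure_eq_measure)
  next
    case False
    then have "\<not> 0 \<le> t \<or> {z \<in> space M. f z \<in> {1/2..1-t}} = {}" by auto
    then have "(\<integral>\<^sup>+z. h z t \<partial>M) = 0" by (auto simp only: h2 emeasure_empty if_False if_True if_cancel)
    then show ?thesis by simp
  qed
  have A: "(\<integral>\<^sup>+z. ennreal (if 1/2 \<le> f z then 1 - f z else 0) \<partial>M)
      \<le> (\<integral>\<^sup>+z. ennreal (if f z < 1/2 then f z else 0) \<partial>M)"
  proof -
    have "(\<integral>\<^sup>+z. ennreal (if 1/2 \<le> f z then 1 - f z else 0) \<partial>M) = (\<integral>\<^sup>+z. \<integral>\<^sup>+t. h z t \<partial>lborel \<partial>M)"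
      by (intro nn_integral_cong) (simp add: h1)
    also have "\<dots> = (\<integral>\<^sup>+t. \<integral>\<^sup>+z. h z t \<partial>M \<partial>lborel)"
      using PL.Fubini'[OF hm] by simp
    also have "\<dots> \<le> (\<integral>\<^sup>+t. \<integral>\<^sup>+z. g z t \<partial>M \<partial>lborel)"
      by (intro nn_integral_mono pw)
    also have "\<dots> = (\<integral>\<^sup>+z. \<integral>\<^sup>+t. g z t \<partial>lborel \<partial>M)"
      using PL.Fubini'[OF gm] by simp
    also have "\<dots> = (\<integral>\<^sup>+z. ennreal (if f z < 1/2 then f z else 0) \<partial>M)"
      by (intro nn_integral_cong) (simp add: g1)
    finally show ?thesis .
  qed
  have "emeasure M {z \<in> space M. 1/2 \<le> f z} = (\<integral>\<^sup>+z. indicator {z \<in> space M. 1/2 \<le> f z} z \<partial>M)"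
    by (intro nn_integral_indicator[symmetric]) measurable
  also have "\<dots> = (\<integral>\<^sup>+z. ennreal (if 1/2 \<le> f z then 1 - f z else 0) + ennreal (if 1/2 \<le> f z then f z else 0) \<partial>M)"
    using fb by (intro nn_integral_cong) (auto split: split_indicator simp: ennreal_plus[symmetric] simp del: ennreal_plus)
  also have "\<dots> = (\<integral>\<^sup>+z. ennreal (if 1/2 \<le> f z then 1 - f z else 0) \<partial>M) + (\<integral>\<^sup>+z. ennreal (if 1/2 \<le> f z then f z else 0) \<partial>M)"
    by (intro nn_integral_add) measurable
  also have "\<dots> \<le> (\<integral>\<^sup>+z. ennreal (if f z < 1/2 then f z else 0) \<partial>M) + (\<integral>\<^sup>+z. ennreal (if 1/2 \<le> f z then f z else 0) \<partial>M)"
    using A by (rule add_right_mono)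
  also have "\<dots> = (\<integral>\<^sup>+z. ennreal (if f z < 1/2 then f z else 0) + ennreal (if 1/2 \<le> f z then f z else 0) \<partial>M)"
    by (intro nn_integral_add[symmetric]) measurable
  also have "\<dots> = (\<integral>\<^sup>+z. ennreal (f z) \<partial>M)"
    by (intro nn_integral_cong) auto
  also have "\<dots> = ennreal (\<integral>z. f z \<partial>M)"
    using fb by (intro nn_integral_eq_integral M.integrable_const_bound[where B=1]) (auto intro!: AE_I2)
  finally have "ennreal (measure M {z \<in> space M. 1/2 \<le> f z}) \<le> ennreal (\<integral>z. f z \<partial>M)"
    by (simp add: M.emeasure_eq_measure)
  moreover have "0 \<le> (\<integral>z. f z \<partial>M)"
    using fb by (intro integral_nonneg_AE AE_I2) auto
  ultimately show ?thesis by (simp add: ennreal_le_iff)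
qed

lemma setup_meas:
  fixes X :: "'x measure"
    and D :: "('x \<times> nat) measure"
    and \<rho> :: "('x \<Rightarrow> nat) measure"
  assumes D_sets: "sets D = sets (X \<Otimes>\<^sub>M count_space UNIV)"
    and eval_meas: "(\<lambda>(h, x). h x) \<in> measurable (\<rho> \<Otimes>\<^sub>M X) (count_space UNIV)"
  shows "(\<lambda>(z, h). indicator {h. h (fst z) \<noteq> snd z} h :: real) \<in> borel_measurable (D \<Otimes>\<^sub>M \<rho>)"
proof -
  have fstD: "fst \<in> measurable D X"
    using measurable_cong_sets[OF D_sets refl] measurable_fst by blast
  have sndD: "snd \<in> measurable D (count_space UNIV)"
    using measurable_cong_sets[OF D_sets refl] measurable_snd by blast
  have m1: "(\<lambda>(z, h). (h, fst z)) \<in> measurable (D \<Otimes>\<^sub>M \<rho>) (\<rho> \<Otimes>\<^sub>M X)"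
    using fstD by (auto simp: case_prod_unfold intro!: measurable_Pair measurable_compose[OF measurable_fst])
  have ev: "(\<lambda>p. snd p (fst (fst p))) \<in> measurable (D \<Otimes>\<^sub>M \<rho>) (count_space UNIV)"
    using measurable_comp[OF m1 eval_meas] by (simp add: comp_def case_prod_unfold)
  have sn: "(\<lambda>p. snd (fst p)) \<in> measurable (D \<Otimes>\<^sub>M \<rho>) (count_space UNIV)"
    using sndD by (auto intro!: measurable_compose[OF measurable_fst])
  have "(\<lambda>p. (\<lambda>i p. if i \<noteq> snd (fst p) then 1 else 0 :: real) (snd p (fst (fst p))) p) \<in> borel_measurable (D \<Otimes>\<^sub>M \<rho>)"
  proof (rule measurable_compose_countable[OF _ ev])
    fix i :: nat
    show "(\<lambda>p. if i \<noteq> snd (fst p) then 1 else 0 :: real) \<in> borel_measurable (D \<Otimes>\<^sub>M \<rho>)"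
      using measurable_compose[OF sn borel_measurable_count_space[where f="\<lambda>j. if i \<noteq> j then 1 else 0 :: real"]]
      by simp
  qed
  then show ?thesis
    by (simp add: case_prod_unfold indicator_def of_bool_def)
qed


theorem theorem1:
  fixes K :: nat
    and X :: "'x measure"
    and D :: "('x \<times> nat) measure"
    and \<rho> :: "('x \<Rightarrow> nat) measure"
    and hMV :: "'x \<Rightarrow> nat"
  assumes K: "K \<ge> 2"
    and D_prob: "prob_space D"
    and D_sets: "sets D = sets (X \<Otimes>\<^sub>M count_space UNIV)"
    and D_labels: "AE z in D. snd z \<in> {1..K}"
    and rho_prob: "prob_space \<rho>"
    and rho_range: "\<forall>h\<in>space \<rho>. \<forall>x\<in>space X. h x \<in> {1..K}"
    and eval_meas: "(\<lambda>(h, x). h x) \<in> measurable (\<rho> \<Otimes>\<^sub>M X) (count_space UNIV)"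
    and MV: "is_majority_vote K X \<rho> hMV"
    and MV_meas: "hMV \<in> measurable X (count_space UNIV)"
    and comp: "competent \<rho> D"
    and nonzero: "avg_err \<rho> D \<noteq> 0"
  shows "EIR \<rho> D hMV \<ge> 0 \<and> err D hMV \<le> avg_err \<rho> D"
proof -
  interpret D: prob_space D by fact
  interpret R: prob_space \<rho> by fact
  interpret DR: pair_prob_space D \<rho> by unfold_locales
  define F where "F = (\<lambda>(z :: 'x \<times> nat, h :: 'x \<Rightarrow> nat). indicator {h. h (fst z) \<noteq> snd z} h :: real)"
  have F_meas[measurable]: "F \<in> borel_measurable (D \<Otimes>\<^sub>M \<rho>)"
    unfolding F_def by (rule setup_meas[OF D_sets eval_meas])
  have Wdef: "W \<rho> z = (\<integral>h. F (z, h) \<partial>\<rho>)" for z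
    by (simp add: W_def F_def)
  have W_meas[measurable]: "W \<rho> \<in> borel_measurable D"
  proof -
    have "(\<lambda>z. \<integral>h. (\<lambda>z h. F (z, h)) z h \<partial>\<rho>) \<in> borel_measurable D"
      by (rule R.borel_measurable_lebesgue_integral) simp
    moreover have "W \<rho> = (\<lambda>z. \<integral>h. F (z, h) \<partial>\<rho>)" by (simp add: fun_eq_iff Wdef)
    ultimately show ?thesis by simp
  qed
  have W_b: "0 \<le> W \<rho> z \<and> W \<rho> z \<le> 1" for z
    by (simp add: W_def R.prob_le_1)
  have spaceD: "space D = space X \<times> UNIV"
    using sets_eq_imp_space_eq[OF D_sets] by (simp add: space_pair_measure)
  have avg: "avg_err \<rho> D = (\<integral>z. W \<rho> z \<partial>D)"
  proof -
    have "err D h = (\<integral>z. F (z, h) \<partial>D)" for h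
    proof -
      have "{z \<in> space D. h (fst z) \<noteq> snd z} = {z. h (fst z) \<noteq> snd z} \<inter> space D" by auto
      moreover have "(\<integral>z. F (z, h) \<partial>D) = (\<integral>z. indicator {z. h (fst z) \<noteq> snd z} z \<partial>D)"
        by (simp add: F_def indicator_def)
      ultimately show ?thesis
        by (simp add: err_def)
    qed
    then have "avg_err \<rho> D = (\<integral>h. \<integral>z. F (z, h) \<partial>D \<partial>\<rho>)"
      by (simp add: avg_err_def)
    also have "\<dots> = (\<integral>z. \<integral>h. F (z, h) \<partial>\<rho> \<partial>D)"
    proof -
      have intF: "integrable (D \<Otimes>\<^sub>M \<rho>) F"
        by (rule DR.P.integrable_const_bound[where B=1, OF _ F_meas]) (auto simp: F_def split: split_indicator)
      show ?thesis using DR.Fubini_integral[of "\<lambda>z h. F (z, h)"] intF by simp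
    qed
    finally show ?thesis by (simp add: Wdef)
  qed
  have key: "AE z in D. hMV (fst z) \<noteq> snd z \<longrightarrow> 1/2 \<le> W \<rho> z"
    using D_labels
  proof (rule AE_mp, intro AE_I2 impI)
    fix z assume z: "z \<in> space D" and lab: "snd z \<in> {1..K}" and ne: "hMV (fst z) \<noteq> snd z"
    define x where "x = fst z"
    define y where "y = snd z"
    define m where "m = hMV x"
    have x: "x \<in> space X" using z spaceD x_def by auto
    have evx: "(\<lambda>h. h x) \<in> measurable \<rho> (count_space UNIV)"
      using measurable_comp[OF measurable_Pair2'[OF x] eval_meas] by (simp add: comp_def)
    have ind: "(\<lambda>h. indicator {h. h x = j} h :: real) = (\<lambda>h. indicator {j} (h x))" for j
      by (auto simp: fun_eq_iff split: split_indicator)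
    have int: "integrable \<rho> (\<lambda>h. indicator {h. h x = j} h :: real)" for j
      unfolding ind
      by (intro R.integrable_const_bound[where B=1] AE_I2 measurable_compose[OF evx borel_measurable_count_space])
         (auto split: split_indicator)
    have ind2: "(\<lambda>h. indicator {h. h x \<noteq> j} h :: real) = (\<lambda>h. indicator (-{j}) (h x))" for j
      by (auto simp: fun_eq_iff split: split_indicator)
    have int2: "integrable \<rho> (\<lambda>h. indicator {h. h x \<noteq> j} h :: real)" for j
      unfolding ind2
      by (intro R.integrable_const_bound[where B=1] AE_I2 measurable_compose[OF evx borel_measurable_count_space])
         (auto split: split_indicator)
    have mv: "vote \<rho> x y \<le> vote \<rho> x m"
      using MV x lab unfolding is_majority_vote_def m_def y_def by auto
    have ym: "y \<noteq> m" using ne by (simp add: m_def x_def y_def)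
    have "vote \<rho> x y + vote \<rho> x m = (\<integral>h. indicator {h. h x = y} h + indicator {h. h x = m} h \<partial>\<rho>)"
      unfolding vote_def using int by (simp add: Bochner_Integration.integral_add)
    also have "\<dots> \<le> (\<integral>h. 1 \<partial>\<rho>)"
      using int ym by (intro integral_mono Bochner_Integration.integrable_add) (auto split: split_indicator)
    finally have s1: "vote \<rho> x y + vote \<rho> x m \<le> 1" by (simp add: R.prob_space)
    have "W \<rho> z + vote \<rho> x y = (\<integral>h. indicator {h. h x \<noteq> y} h + indicator {h. h x = y} h \<partial>\<rho>)"
      unfolding vote_def W_def x_def[symmetric] y_def[symmetric]
      using int[of y] int2[of y] by (simp add: Bochner_Integration.integral_add)
    also have "\<dots> = (\<integral>h. 1 \<partial>\<rho>)"
      by (intro Bochner_Integration.integral_cong) (auto split: split_indicator)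
    also have "\<dots> = 1" by (simp add: R.prob_space)
    finally have "W \<rho> z + vote \<rho> x y = 1" .
    then show "1/2 \<le> W \<rho> z" using s1 mv by linarith
  qed
  have "err D hMV \<le> measure D {z \<in> space D. 1/2 \<le> W \<rho> z}"
    unfolding err_def
    by (rule D.finite_measure_mono_AE) (use key in auto, measurable)
  also have "\<dots> \<le> (\<integral>z. W \<rho> z \<partial>D)"
  proof (rule layer_cake_comp[OF D_prob W_meas])
    show "\<And>z. z \<in> space D \<Longrightarrow> 0 \<le> W \<rho> z \<and> W \<rho> z \<le> 1" using W_b by auto
    show "\<And>t. 0 \<le> t \<Longrightarrow> t \<le> 1/2 \<Longrightarrow>
       measure D {z \<in> space D. W \<rho> z \<in> {1/2..1-t}} \<le> measure D {z \<in> space D. W \<rho> z \<in> {t..<1/2}}"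
      using comp unfolding competent_def by auto
  qed
  finally have le: "err D hMV \<le> avg_err \<rho> D" using avg by simp
  have "0 \<le> avg_err \<rho> D" using avg W_b by (simp add: integral_nonneg_AE)
  then have "0 < avg_err \<rho> D" using nonzero by linarith
  then have "0 \<le> EIR \<rho> D hMV" using le by (simp add: EIR_def)
  with le show ?thesis by simp
qed

end
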